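(* Let $(M^4,g,I,J)$ be a nondegenerate generalized Kähler structure with angle function $p$ and Lee form $\theta=\theta_I$. Then $$\theta=\frac{1}{2(p^2-1)}\,dp\circ[I,J].$$
   Context: Generalized Kähler (GK) structure: $I,J$ are integrable complex structures and $g$ is Hermitian for both. With $\omega_I(X,Y)=g(X,IY)$ and $\omega_J(X,Y)=g(X,JY)$, one has $d^c_I\omega_I=H=-d^c_J\omega_J$ and $dH=0$, where $d^c=\sqrt{-1}(\bar\partial-\partial)$. The Lee form $\theta=\theta_I$ is defined by $d\omega_I=\theta\wedge\omega_I$. The angle function is $p=\frac14\operatorname{tr}(IJ)$. Nondegenerate means $g^{-1}[I,J]$ is nondegenerate; in dimension $4$ this is equivalent to $I,J$ inducing the same orientation with $|p|<1$. For a $1$-form $\alpha$ and an endomorphism $A$, $\alpha\circ A$ denotes $X\mapsto\alpha(AX)$. *)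

theory Defs
  imports "HOL-Analysis.Analysis"
begin

text \<open>Local (coordinate) model: the 4-manifold is an open set U of real^4.
 Tangent vectors are elements of real^4; endomorphism fields are matrix-valued
 functions; a k-form is a function of the base point and k tangent vectors;
 a 1-form theta is represented by the vector field with theta(X) = theta x \<bullet> X.\<close>

type_synonym pt = "real^4"
type_synonym endo_field = "pt \<Rightarrow> real^4^4"
type_synonym form2 = "pt \<Rightarrow> real^4 \<Rightarrow> real^4 \<Rightarrow> real"
type_synonym form3 = "pt \<Rightarrow> real^4 \<Rightarrow> real^4 \<Rightarrow> real^4 \<Rightarrow> real"

fun Ck :: "nat \<Rightarrow> pt set \<Rightarrow> (pt \<Rightarrow> real) \<Rightarrow> bool" where
  "Ck 0 U f = continuous_on U f"
| "Ck (Suc k) U f = (f differentiable_on U \<and>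
      (\<forall>v. Ck k U (\<lambda>x. frechet_derivative f (at x) v)))"

definition smooth_on :: "pt set \<Rightarrow> (pt \<Rightarrow> real) \<Rightarrow> bool" where
  "smooth_on U f \<longleftrightarrow> (\<forall>k. Ck k U f)"

definition smooth_endo :: "pt set \<Rightarrow> endo_field \<Rightarrow> bool" where
  "smooth_endo U A \<longleftrightarrow> (\<forall>i j. smooth_on U (\<lambda>x. A x $ i $ j))"

definition dd :: "(pt \<Rightarrow> 'b::real_normed_vector) \<Rightarrow> pt \<Rightarrow> real^4 \<Rightarrow> 'b" where
  "dd f x v = frechet_derivative f (at x) v"

text \<open>Exterior derivative (evaluated on constant coordinate vector fields).\<close>
definition d2 :: "form2 \<Rightarrow> form3" where
  "d2 \<omega> x X Y Z = dd (\<lambda>y. \<omega> y Y Z) x X + dd (\<lambda>y. \<omega> y Z X) x Y + dd (\<lambda>y. \<omega> y X Y) x Z"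

definition d3 :: "form3 \<Rightarrow> pt \<Rightarrow> real^4 \<Rightarrow> real^4 \<Rightarrow> real^4 \<Rightarrow> real^4 \<Rightarrow> real" where
  "d3 H x W X Y Z = dd (\<lambda>y. H y X Y Z) x W - dd (\<lambda>y. H y W Y Z) x X
                  + dd (\<lambda>y. H y W X Z) x Y - dd (\<lambda>y. H y W X Y) x Z"

definition wedge12 :: "(pt \<Rightarrow> real^4) \<Rightarrow> form2 \<Rightarrow> form3" where
  "wedge12 \<theta> \<omega> x X Y Z = (\<theta> x \<bullet> X) * \<omega> x Y Z + (\<theta> x \<bullet> Y) * \<omega> x Z X + (\<theta> x \<bullet> Z) * \<omega> x X Y"

definition act2 :: "endo_field \<Rightarrow> form2 \<Rightarrow> form2" where
  "act2 A \<omega> x X Y = \<omega> x (A x *v X) (A x *v Y)"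

definition act3 :: "endo_field \<Rightarrow> form3 \<Rightarrow> form3" where
  "act3 A H x X Y Z = H x (A x *v X) (A x *v Y) (A x *v Z)"

text \<open>d^c = sqrt(-1)(dbar - partial) = I^{-1} d I on forms.\<close>
definition dc :: "endo_field \<Rightarrow> form2 \<Rightarrow> form3" where
  "dc I \<omega> = act3 (\<lambda>x. matrix_inv (I x)) (d2 (act2 I \<omega>))"

definition lie_bracket :: "(pt \<Rightarrow> real^4) \<Rightarrow> (pt \<Rightarrow> real^4) \<Rightarrow> pt \<Rightarrow> real^4" where
  "lie_bracket V W x = dd W x (V x) - dd V x (W x)"

definition nijenhuis :: "endo_field \<Rightarrow> (pt \<Rightarrow> real^4) \<Rightarrow> (pt \<Rightarrow> real^4) \<Rightarrow> pt \<Rightarrow> real^4" where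
  "nijenhuis I V W x =
     lie_bracket (\<lambda>y. I y *v V y) (\<lambda>y. I y *v W y) x
     - I x *v lie_bracket (\<lambda>y. I y *v V y) W x
     - I x *v lie_bracket V (\<lambda>y. I y *v W y) x
     - lie_bracket V W x"

definition integrable_cs :: "pt set \<Rightarrow> endo_field \<Rightarrow> bool" where
  "integrable_cs U I \<longleftrightarrow> smooth_endo U I \<and>
     (\<forall>x\<in>U. I x ** I x = - mat 1 \<and>
        (\<forall>X Y. nijenhuis I (\<lambda>_. X) (\<lambda>_. Y) x = 0))"

definition gf :: "endo_field \<Rightarrow> pt \<Rightarrow> real^4 \<Rightarrow> real^4 \<Rightarrow> real" where
  "gf g x X Y = X \<bullet> (g x *v Y)"

definition riem_metric :: "pt set \<Rightarrow> endo_field \<Rightarrow> bool" where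
  "riem_metric U g \<longleftrightarrow> smooth_endo U g \<and>
     (\<forall>x\<in>U. transpose (g x) = g x \<and> (\<forall>X. X \<noteq> 0 \<longrightarrow> gf g x X X > 0))"

definition hermitian :: "pt set \<Rightarrow> endo_field \<Rightarrow> endo_field \<Rightarrow> bool" where
  "hermitian U g I \<longleftrightarrow> (\<forall>x\<in>U. \<forall>X Y. gf g x (I x *v X) (I x *v Y) = gf g x X Y)"

definition fund_form :: "endo_field \<Rightarrow> endo_field \<Rightarrow> form2" where
  "fund_form g I x X Y = gf g x X (I x *v Y)"

definition gen_kahler :: "pt set \<Rightarrow> endo_field \<Rightarrow> endo_field \<Rightarrow> endo_field \<Rightarrow> bool" where
  "gen_kahler U g I J \<longleftrightarrow> open U \<and> riem_metric U g \<and>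
     integrable_cs U I \<and> integrable_cs U J \<and> hermitian U g I \<and> hermitian U g J \<and>
     (let H = dc I (fund_form g I) in
        (\<forall>x\<in>U. \<forall>X Y Z. H x X Y Z = - dc J (fund_form g J) x X Y Z) \<and>
        (\<forall>x\<in>U. \<forall>W X Y Z. d3 H x W X Y Z = 0))"

definition commutator :: "endo_field \<Rightarrow> endo_field \<Rightarrow> endo_field" where
  "commutator I J x = I x ** J x - J x ** I x"

definition angle_fun :: "endo_field \<Rightarrow> endo_field \<Rightarrow> pt \<Rightarrow> real" where
  "angle_fun I J x = trace (I x ** J x) / 4"

definition nondegenerate :: "pt set \<Rightarrow> endo_field \<Rightarrow> endo_field \<Rightarrow> endo_field \<Rightarrow> bool" where
  "nondegenerate U g I J \<longleftrightarrow> (\<forall>x\<in>U. invertible (matrix_inv (g x) ** commutator I J x))"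

end

theory Submission
  imports Defs
begin

lemma neg_mat_vec: "(- A) *v (x::real^'n) = - (A *v x)" for A :: "real^'n^'m"
  by (simp add: vec_eq_iff matrix_vector_mult_def sum_negf)

lemma mv_scaleR: "A *v (c *\<^sub>R x) = c *\<^sub>R (A *v (x::real^'n))" for A :: "real^'n^'m"
  by (simp add: vec_eq_iff matrix_vector_mult_def sum_distrib_left algebra_simps)

lemma mv_add: "A *v (x + y) = A *v x + A *v (y::real^'n)" for A :: "real^'n^'m"
  by (simp add: matrix_vector_right_distrib)

lemma mv_diff: "A *v (x - y) = A *v x - A *v (y::real^'n)" for A :: "real^'n^'m"
  by (simp add: matrix_vector_mult_diff_distrib)

lemma mv_uminus: "A *v (- y) = - (A *v (y::real^'n))" for A :: "real^'n^'m"
  by (simp add: vec_eq_iff matrix_vector_mult_def sum_negf)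

lemma gsym_swap:
  fixes g :: "real^4^4"
  assumes "transpose g = g"
  shows "X \<bullet> (g *v Y) = Y \<bullet> (g *v X)"
proof -
  have "X \<bullet> (g *v Y) = (X v* g) \<bullet> Y" by (simp add: dot_lmul_matrix)
  also have "\<dots> = (transpose g *v X) \<bullet> Y" by (metis transpose_matrix_vector)
  also have "\<dots> = Y \<bullet> (g *v X)" using assms by (simp add: inner_commute)
  finally show ?thesis .
qed

lemma ex_not_span2: "\<exists>w::real^4. w \<notin> span {a, b}"
proof (rule ccontr)
  assume "\<not> ?thesis"
  then have "span {a,b} = UNIV" by auto
  then have "dim (UNIV::(real^4) set) = dim {a,b}" by (metis dim_span)
  also have "\<dots> \<le> card {a,b}" by (rule dim_le_card') simp
  also have "\<dots> \<le> 2" by (simp add: card_insert_le_m1)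
  finally show False by simp
qed

context
  fixes g K :: "real^4^4"
  assumes gsym: "transpose g = g" and K2: "K ** K = - mat 1"
    and Kg: "\<And>X Y. (K *v X) \<bullet> (g *v (K *v Y)) = X \<bullet> (g *v Y)"
begin

lemma KK: "K *v (K *v X) = - X"
  by (simp add: matrix_vector_mul_assoc K2 neg_mat_vec)

lemma sw: "X \<bullet> (g *v Y) = Y \<bullet> (g *v X)"
  by (rule gsym_swap[OF gsym])

lemma skew: "X \<bullet> (g *v (K *v Y)) = - ((K *v X) \<bullet> (g *v Y))"
  using Kg[of X "K *v Y"] by (simp add: KK mv_uminus)

lemma skew0: "X \<bullet> (g *v (K *v X)) = 0"
  using skew[of X X] sw[of "K *v X" X] by simp

lemma frame:
  assumes gpos: "\<And>X. X \<noteq> 0 \<Longrightarrow> X \<bullet> (g *v X) > 0"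
  shows "\<exists>f1 f2 f3 f4.
     f1 \<bullet> (g *v f1) = 1 \<and> f1 \<bullet> (g *v f2) = 0 \<and> f1 \<bullet> (g *v f3) = 0 \<and> f1 \<bullet> (g *v f4) = 0 \<and>
     f2 \<bullet> (g *v f1) = 0 \<and> f2 \<bullet> (g *v f2) = 1 \<and> f2 \<bullet> (g *v f3) = 0 \<and> f2 \<bullet> (g *v f4) = 0 \<and>
     f3 \<bullet> (g *v f1) = 0 \<and> f3 \<bullet> (g *v f2) = 0 \<and> f3 \<bullet> (g *v f3) = 1 \<and> f3 \<bullet> (g *v f4) = 0 \<and>
     f4 \<bullet> (g *v f1) = 0 \<and> f4 \<bullet> (g *v f2) = 0 \<and> f4 \<bullet> (g *v f3) = 0 \<and> f4 \<bullet> (g *v f4) = 1 \<and>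
     K *v f1 = f2 \<and> K *v f2 = - f1 \<and> K *v f3 = f4 \<and> K *v f4 = - f3"
proof -
  have unit: "\<exists>f. f \<bullet> (g *v f) = 1 \<and> f = (1 / sqrt (e \<bullet> (g *v e))) *\<^sub>R e" if "e \<noteq> 0" for e
  proof -
    have pos: "e \<bullet> (g *v e) > 0" using gpos that by blast
    have "((1 / sqrt (e \<bullet> (g *v e))) *\<^sub>R e) \<bullet> (g *v ((1 / sqrt (e \<bullet> (g *v e))) *\<^sub>R e))
        = (e \<bullet> (g *v e)) / (sqrt (e \<bullet> (g *v e)))^2"
      by (simp add: mv_scaleR power2_eq_square)
    also have "\<dots> = 1" using pos by simp
    finally show ?thesis by blast
  qed
  have a0: "axis 1 1 \<noteq> (0::real^4)" by (simp add: axis_eq_0_iff)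
  obtain f1 where f11: "f1 \<bullet> (g *v f1) = 1"
    using unit[OF a0] by blast
  define f2 where "f2 = K *v f1"
  have f12: "f1 \<bullet> (g *v f2) = 0" unfolding f2_def by (rule skew0)
  have f21: "f2 \<bullet> (g *v f1) = 0" using f12 sw by metis
  have f22: "f2 \<bullet> (g *v f2) = 1" unfolding f2_def using Kg f11 by simp
  obtain w where w: "w \<notin> span {f1, f2}" using ex_not_span2 by blast
  define w' where "w' = w - (f1 \<bullet> (g *v w)) *\<^sub>R f1 - (f2 \<bullet> (g *v w)) *\<^sub>R f2"
  have w'0: "w' \<noteq> 0"
  proof
    assume "w' = 0"
    then have "w = (f1 \<bullet> (g *v w)) *\<^sub>R f1 + (f2 \<bullet> (g *v w)) *\<^sub>R f2" unfolding w'_def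
      by (simp add: algebra_simps)
    then have "w \<in> span {f1, f2}"
      by (metis span_add span_base span_scale insertI1 insertI2 singletonI)
    with w show False by blast
  qed
  have w1: "f1 \<bullet> (g *v w') = 0"
    unfolding w'_def by (simp add: mv_diff mv_scaleR inner_diff_right f11 f12)
  have w2: "f2 \<bullet> (g *v w') = 0"
    unfolding w'_def by (simp add: mv_diff mv_scaleR inner_diff_right f21 f22)
  obtain f3 where f33: "f3 \<bullet> (g *v f3) = 1" and f3: "f3 = (1 / sqrt (w' \<bullet> (g *v w'))) *\<^sub>R w'"
    using unit[OF w'0] by blast
  have f13: "f1 \<bullet> (g *v f3) = 0" unfolding f3 by (simp add: mv_scaleR w1)
  have f23: "f2 \<bullet> (g *v f3) = 0" unfolding f3 by (simp add: mv_scaleR w2)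
  define f4 where "f4 = K *v f3"
  have f34: "f3 \<bullet> (g *v f4) = 0" unfolding f4_def by (rule skew0)
  have f44: "f4 \<bullet> (g *v f4) = 1" unfolding f4_def using Kg f33 by simp
  have f14: "f1 \<bullet> (g *v f4) = 0" unfolding f4_def using skew[of f1 f3] f23 f2_def by simp
  have f24: "f2 \<bullet> (g *v f4) = 0" unfolding f4_def f2_def using Kg f13 by simp
  have Kf2: "K *v f2 = - f1" unfolding f2_def by (rule KK)
  have Kf4: "K *v f4 = - f3" unfolding f4_def by (rule KK)
  show ?thesis
    apply (rule exI[of _ f1], rule exI[of _ f2], rule exI[of _ f3], rule exI[of _ f4])
    using f11 f12 f13 f14 f22 f23 f24 f33 f34 f44 Kf2 Kf4 f2_def f4_def sw by metis
qed

end

definition hA :: "(real^4 \<Rightarrow> real^4^4) \<Rightarrow> real^4 \<Rightarrow> real^4 \<Rightarrow> real^4 \<Rightarrow> real" where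
  "hA h X Y Z = Y \<bullet> (h X *v Z)"
definition cA :: "real^4^4 \<Rightarrow> (real^4 \<Rightarrow> real^4^4) \<Rightarrow> real^4 \<Rightarrow> real^4 \<Rightarrow> real^4 \<Rightarrow> real" where
  "cA g c X Y Z = Z \<bullet> (g *v (c X *v Y))"
definition Gam :: "(real^4 \<Rightarrow> real^4^4) \<Rightarrow> real^4 \<Rightarrow> real^4 \<Rightarrow> real^4 \<Rightarrow> real" where
  "Gam h v Y Z = (hA h v Z Y + hA h Y Z v - hA h Z v Y) / 2"
definition domf :: "real^4^4 \<Rightarrow> real^4^4 \<Rightarrow> (real^4 \<Rightarrow> real^4^4) \<Rightarrow> (real^4 \<Rightarrow> real^4^4) \<Rightarrow> real^4 \<Rightarrow> real^4 \<Rightarrow> real^4 \<Rightarrow> real" where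
  "domf g K h c X Y Z = hA h X Y (K *v Z) + cA g c X Z Y + hA h Y Z (K *v X) + cA g c Y X Z
       + hA h Z X (K *v Y) + cA g c Z Y X"
definition Hf :: "real^4^4 \<Rightarrow> real^4^4 \<Rightarrow> (real^4 \<Rightarrow> real^4^4) \<Rightarrow> (real^4 \<Rightarrow> real^4^4) \<Rightarrow> real^4 \<Rightarrow> real^4 \<Rightarrow> real^4 \<Rightarrow> real" where
  "Hf g K h c X Y Z = domf g K h c (- (K *v X)) (- (K *v Y)) (- (K *v Z))"

lemma hA_neg:
  assumes "linear h"
  shows "hA h (- X) Y Z = - hA h X Y Z" "hA h X (- Y) Z = - hA h X Y Z" "hA h X Y (- Z) = - hA h X Y Z"
  using assms by (simp_all add: hA_def linear_neg neg_mat_vec mv_uminus)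

lemma cA_neg:
  assumes "linear c"
  shows "cA g c (- X) Y Z = - cA g c X Y Z" "cA g c X (- Y) Z = - cA g c X Y Z" "cA g c X Y (- Z) = - cA g c X Y Z"
  using assms by (simp_all add: cA_def linear_neg neg_mat_vec mv_uminus)

lemma lemA:
  fixes g K :: "real^4^4" and h c :: "real^4 \<Rightarrow> real^4^4"
  assumes lh: "linear h" and lc: "linear c" and K2: "K ** K = - mat 1"
    and hsym: "\<And>v Y Z. hA h v Y Z = hA h v Z Y"
    and herm1: "\<And>A B C. cA g c A B (K *v C) + hA h A (K *v B) (K *v C) + cA g c A C (K *v B) - hA h A B C = 0"
    and nij: "\<And>A B C. cA g c (K *v A) B C - cA g c (K *v B) A C - cA g c B A (K *v C) + cA g c A B (K *v C) = 0"
  shows "cA g c v Y Z = - Gam h v (K *v Y) Z - Gam h v Y (K *v Z)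
            + (Hf g K h c v Z (K *v Y) + Hf g K h c v (K *v Z) Y) / 2"
proof -
  have KK: "\<And>X. K *v (K *v X) = - X" by (simp add: matrix_vector_mul_assoc K2 neg_mat_vec)
  note N = hA_neg[OF lh] cA_neg[OF lc] KK mv_uminus minus_minus
  show ?thesis
    using herm1[of v Y "K *v Z"] herm1[of Y v "K *v Z"] herm1[of "K *v v" "K *v Y" "K *v Z"] herm1[of "K *v Y" v Z]
      nij[of v "K *v Z" Y] nij[of v Z "K *v Y"] nij[of "K *v v" Z Y] nij[of v Y "K *v Z"]
      hsym[of Y "(K *v Z)" v] hsym[of "(K *v Y)" Z v] hsym[of Z "(K *v Y)" v] hsym[of "(K *v Z)" Y v]
      hsym[of v Y "(K *v Z)"] hsym[of v "(K *v Y)" Z] hsym[of "(K *v v)" Y Z] hsym[of "(K *v v)" "(K *v Y)" "(K *v Z)"]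
    unfolding Gam_def Hf_def domf_def N
    by argo
qed

lemma num4_neq: "(1::4) \<noteq> 2" "(1::4) \<noteq> 3" "(1::4) \<noteq> 4" "(2::4) \<noteq> 3" "(2::4) \<noteq> 4" "(3::4) \<noteq> 4"
  "(2::4) \<noteq> 1" "(3::4) \<noteq> 1" "(4::4) \<noteq> 1" "(3::4) \<noteq> 2" "(4::4) \<noteq> 2" "(4::4) \<noteq> 3"
  by simp_all

definition rows4 :: "real^4 \<Rightarrow> real^4 \<Rightarrow> real^4 \<Rightarrow> real^4 \<Rightarrow> real^4^4" where
  "rows4 a b c d = (\<chi> i. if i = 1 then a else if i = 2 then b else if i = 3 then c else d)"

lemma rows4_nth: "rows4 a b c d $ 1 = a" "rows4 a b c d $ 2 = b" "rows4 a b c d $ 3 = c" "rows4 a b c d $ 4 = d"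
  by (simp_all add: rows4_def)

lemma frame_span_trace:
  fixes g :: "real^4^4"
  assumes o: "f1 \<bullet> (g *v f1) = 1" "f1 \<bullet> (g *v f2) = 0" "f1 \<bullet> (g *v f3) = 0" "f1 \<bullet> (g *v f4) = 0"
     "f2 \<bullet> (g *v f1) = 0" "f2 \<bullet> (g *v f2) = 1" "f2 \<bullet> (g *v f3) = 0" "f2 \<bullet> (g *v f4) = 0"
     "f3 \<bullet> (g *v f1) = 0" "f3 \<bullet> (g *v f2) = 0" "f3 \<bullet> (g *v f3) = 1" "f3 \<bullet> (g *v f4) = 0"
     "f4 \<bullet> (g *v f1) = 0" "f4 \<bullet> (g *v f2) = 0" "f4 \<bullet> (g *v f3) = 0" "f4 \<bullet> (g *v f4) = 1"
  shows "x = (f1 \<bullet> (g *v x)) *\<^sub>R f1 + (f2 \<bullet> (g *v x)) *\<^sub>R f2 + (f3 \<bullet> (g *v x)) *\<^sub>R f3 + (f4 \<bullet> (g *v x)) *\<^sub>R f4"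
    and "trace M = f1 \<bullet> (g *v (M *v f1)) + f2 \<bullet> (g *v (M *v f2)) + f3 \<bullet> (g *v (M *v f3)) + f4 \<bullet> (g *v (M *v f4))"
proof -
  define Q where "Q = rows4 f1 f2 f3 f4"
  define R where "R = Q ** g"
  have Qi: "Q $ 1 = f1" "Q $ 2 = f2" "Q $ 3 = f3" "Q $ 4 = f4" unfolding Q_def by (simp_all add: rows4_nth)
  have Rrow: "R $ i = Q $ i v* g" for i
    unfolding R_def by (simp add: vec_eq_iff matrix_matrix_mult_def vector_matrix_mult_def mult.commute)
  have RQ: "(R ** transpose Q) $ i $ j = (Q $ i) \<bullet> (g *v (Q $ j))" for i j
  proof -
    have "(R ** transpose Q) $ i $ j = (R $ i) \<bullet> (Q $ j)"
      by (simp add: matrix_matrix_mult_def inner_vec_def transpose_def)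
    also have "\<dots> = (Q $ i) \<bullet> (g *v (Q $ j))" by (simp add: Rrow dot_lmul_matrix)
    finally show ?thesis .
  qed
  have "R ** transpose Q = mat 1"
    unfolding vec_eq_iff forall_4 RQ Qi by (simp add: mat_def o)
  then have inv: "transpose Q ** R = mat 1" by (simp add: matrix_left_right_inverse)
  have "x = (transpose Q ** R) *v x" by (simp add: inv)
  also have "\<dots> = transpose Q *v (R *v x)" by (simp add: matrix_vector_mul_assoc)
  also have "\<dots> = (f1 \<bullet> (g *v x)) *\<^sub>R f1 + (f2 \<bullet> (g *v x)) *\<^sub>R f2 + (f3 \<bullet> (g *v x)) *\<^sub>R f3 + (f4 \<bullet> (g *v x)) *\<^sub>R f4"
  proof -
    have Rx: "(R *v x) $ i = (Q $ i) \<bullet> (g *v x)" for i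
    proof -
      have "(R *v x) $ i = (R $ i) \<bullet> x" by (simp add: matrix_vector_mult_def inner_vec_def mult.commute)
      then show ?thesis by (simp add: Rrow dot_lmul_matrix)
    qed
    have tq: "transpose Q *v y = y$1 *\<^sub>R Q$1 + y$2 *\<^sub>R Q$2 + y$3 *\<^sub>R Q$3 + y$4 *\<^sub>R Q$4" for y
      by (simp add: vec_eq_iff matrix_vector_mult_def transpose_def sum_4 mult.commute)
    show ?thesis by (simp only: tq Rx Qi)
  qed
  finally show "x = (f1 \<bullet> (g *v x)) *\<^sub>R f1 + (f2 \<bullet> (g *v x)) *\<^sub>R f2 + (f3 \<bullet> (g *v x)) *\<^sub>R f3 + (f4 \<bullet> (g *v x)) *\<^sub>R f4" .
  have "trace M = trace (M ** (transpose Q ** R))" by (simp add: inv)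
  also have "\<dots> = trace (R ** (M ** transpose Q))" by (metis matrix_mul_assoc trace_mul_sym)
  also have "\<dots> = (\<Sum>i\<in>UNIV. (Q $ i) \<bullet> (g *v (M *v (Q $ i))))"
  proof -
    have "(R ** (M ** transpose Q)) $ i $ i = (Q $ i) \<bullet> (g *v (M *v (Q $ i)))" for i
    proof -
      have "(R ** (M ** transpose Q)) $ i $ i = (R $ i) \<bullet> (M *v (Q $ i))"
        by (simp add: matrix_matrix_mult_def matrix_vector_mult_def inner_vec_def transpose_def)
      also have "\<dots> = (Q $ i) \<bullet> (g *v (M *v (Q $ i)))" by (simp add: Rrow dot_lmul_matrix)
      finally show ?thesis .
    qed
    then show ?thesis by (simp add: trace_def)
  qed
  also have "\<dots> = f1 \<bullet> (g *v (M *v f1)) + f2 \<bullet> (g *v (M *v f2)) + f3 \<bullet> (g *v (M *v f3)) + f4 \<bullet> (g *v (M *v f4))"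
    by (simp add: sum_4 Qi)
  finally show "trace M = f1 \<bullet> (g *v (M *v f1)) + f2 \<bullet> (g *v (M *v f2)) + f3 \<bullet> (g *v (M *v f3)) + f4 \<bullet> (g *v (M *v f4))" .
qed

definition Dm :: "(real^4 \<Rightarrow> real^4^4) \<Rightarrow> real^4 \<Rightarrow> real^4 \<Rightarrow> real^4^4" where
  "Dm F x = (\<lambda>v. \<chi> i j. frechet_derivative (\<lambda>y. F y $ i $ j) (at x) v)"

lemma mat_hasderiv:
  fixes F :: "real^4 \<Rightarrow> real^4^4"
  assumes d: "\<And>i j. (\<lambda>y. F y $ i $ j) differentiable (at x)"
  shows "(F has_derivative Dm F x) (at x)"
proof -
  have "((\<lambda>y. F y \<bullet> b) has_derivative (\<lambda>v. Dm F x v \<bullet> b)) (at x)" if b: "b \<in> Basis" for b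
  proof -
    from b obtain i u where bu: "b = axis i u" and u: "u \<in> (Basis :: (real^4) set)"
      unfolding Basis_vec_def by auto
    from u obtain j v where uv: "u = axis j v" and v: "v \<in> (Basis :: real set)"
      unfolding Basis_vec_def by auto
    have v1: "v = 1" using v by simp
    have e1: "(\<lambda>y. F y \<bullet> b) = (\<lambda>y. F y $ i $ j)" by (simp add: bu uv v1 inner_axis)
    have e2: "(\<lambda>w. Dm F x w \<bullet> b) = frechet_derivative (\<lambda>y. F y $ i $ j) (at x)"
      by (simp add: bu uv v1 inner_axis Dm_def)
    show ?thesis unfolding e1 e2 using d frechet_derivative_works by blast
  qed
  then show ?thesis
    using has_derivative_componentwise_within[of F "Dm F x" x UNIV] by simp
qed

lemma bb_mv: "bounded_bilinear (\<lambda>(A::real^4^4) (v::real^4). A *v v)"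
proof -
  have "bilinear (\<lambda>(A::real^4^4) (v::real^4). A *v v)"
    unfolding bilinear_def
    by (auto intro!: linearI simp: matrix_vector_right_distrib matrix_vector_mult_add_rdistrib
        mv_scaleR scaleR_matrix_vector_assoc)
  then show ?thesis by (simp add: bilinear_conv_bounded_bilinear)
qed

lemma mm_add_r: "(A + B) ** C = A ** C + B ** (C::real^'n^'m)" for A B :: "real^'m^'k"
  by (simp add: vec_eq_iff matrix_matrix_mult_def sum.distrib algebra_simps)
lemma mm_scale_l: "(c *\<^sub>R A) ** B = c *\<^sub>R (A ** (B::real^'n^'m))" for A :: "real^'m^'k"
  by (simp add: vec_eq_iff matrix_matrix_mult_def sum_distrib_left algebra_simps)
lemma mm_scale_r: "A ** (c *\<^sub>R B) = c *\<^sub>R (A ** (B::real^'n^'m))" for A :: "real^'m^'k"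
  by (simp add: vec_eq_iff matrix_matrix_mult_def sum_distrib_left algebra_simps)

lemma bb_mm: "bounded_bilinear (\<lambda>(A::real^4^4) (B::real^4^4). A ** B)"
proof -
  have "bilinear (\<lambda>(A::real^4^4) (B::real^4^4). A ** B)"
    unfolding bilinear_def
    by (auto intro!: linearI simp: matrix_add_ldistrib mm_add_r mm_scale_l mm_scale_r)
  then show ?thesis by (simp add: bilinear_conv_bounded_bilinear)
qed

lemma bl_trace: "bounded_linear (trace :: real^4^4 \<Rightarrow> real)"
proof -
  have "linear (trace :: real^4^4 \<Rightarrow> real)"
    by (auto intro!: linearI simp: trace_add trace_def sum_distrib_left sum.distrib)
  then show ?thesis by (simp add: linear_conv_bounded_linear)
qed

lemma D_mv:
  fixes F :: "real^4 \<Rightarrow> real^4^4" and w :: "real^4 \<Rightarrow> real^4"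
  assumes "(F has_derivative F') (at x)" "(w has_derivative w') (at x)"
  shows "((\<lambda>y. F y *v w y) has_derivative (\<lambda>v. F x *v w' v + F' v *v w x)) (at x)"
  using bounded_bilinear.FDERIV[OF bb_mv assms] by simp

lemma D_mm:
  fixes F G :: "real^4 \<Rightarrow> real^4^4"
  assumes "(F has_derivative F') (at x)" "(G has_derivative G') (at x)"
  shows "((\<lambda>y. F y ** G y) has_derivative (\<lambda>v. F x ** G' v + F' v ** G x)) (at x)"
  using bounded_bilinear.FDERIV[OF bb_mm assms] by simp

lemma D_mvc:
  fixes F :: "real^4 \<Rightarrow> real^4^4"
  assumes "(F has_derivative F') (at x)"
  shows "((\<lambda>y. F y *v X) has_derivative (\<lambda>v. F' v *v X)) (at x)"
  using D_mv[OF assms has_derivative_const[of X]] by simp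

lemma zero_deriv:
  assumes "(f has_derivative f') (at x)" "open U" "x \<in> U" "\<And>y. y \<in> U \<Longrightarrow> f y = (0::real)"
  shows "f' v = 0"
proof -
  have "((\<lambda>y. 0::real) has_derivative f') (at x)"
    using has_derivative_transform_within_open[OF assms(1-3)] assms(4) by metis
  then have "f' = (\<lambda>v. 0)" using has_derivative_unique has_derivative_const by blast
  then show ?thesis by simp
qed

lemma smooth_diff:
  assumes "smooth_endo U F" "open U" "y \<in> U"
  shows "(\<lambda>z. F z $ i $ j) differentiable (at y)"
proof -
  have "Ck (Suc 0) U (\<lambda>z. F z $ i $ j)" using assms(1) unfolding smooth_endo_def smooth_on_def by blast
  then have "(\<lambda>z. F z $ i $ j) differentiable_on U" by simp
  then show ?thesis using assms(2,3) differentiable_on_eq_differentiable_at by blast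
qed

lemma smooth_hasderiv:
  assumes "smooth_endo U F" "open U" "y \<in> U"
  shows "(F has_derivative Dm F y) (at y)"
  by (rule mat_hasderiv) (rule smooth_diff[OF assms])

lemma mm_neg_r: "A ** (- B) = - (A ** (B::real^'n^'m))" for A :: "real^'m^'k"
  by (simp add: vec_eq_iff matrix_matrix_mult_def sum_negf)
lemma mm_neg_l: "(- A) ** B = - (A ** (B::real^'n^'m))" for A :: "real^'m^'k"
  by (simp add: vec_eq_iff matrix_matrix_mult_def sum_negf)

lemma inv_neg:
  fixes K :: "real^4^4"
  assumes "K ** K = - mat 1"
  shows "matrix_inv K = - K"
proof -
  have p: "K ** (- K) = mat 1 \<and> (- K) ** K = mat 1"
    using assms by (simp add: mm_neg_r mm_neg_l)
  define M where "M = matrix_inv K"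
  have "K ** M = mat 1 \<and> M ** K = mat 1"
    unfolding M_def matrix_inv_def by (rule someI[of _ "- K"]) (rule p)
  then have "M = M ** (K ** (- K))" using p by simp
  also have "\<dots> = (M ** K) ** (- K)" by (simp add: matrix_mul_assoc)
  also have "\<dots> = - K" using \<open>K ** M = mat 1 \<and> M ** K = mat 1\<close> by simp
  finally show ?thesis unfolding M_def .
qed

lemma ff_hasderiv:
  fixes g I :: "real^4 \<Rightarrow> real^4^4"
  assumes dg: "(g has_derivative h) (at x)" and dI: "(I has_derivative a) (at x)"
  shows "((\<lambda>y. fund_form g I y Y Z) has_derivative
     (\<lambda>v. Y \<bullet> (g x *v (a v *v Z) + h v *v (I x *v Z)))) (at x)"
  unfolding fund_form_def gf_def
  using has_derivative_inner[OF has_derivative_const[of Y] D_mv[OF dg D_mvc[OF dI]]] by simp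

lemma deriv_ff:
  fixes g I :: "real^4 \<Rightarrow> real^4^4"
  assumes dg: "(g has_derivative h) (at x)" and dI: "(I has_derivative a) (at x)"
  shows "dd (\<lambda>y. fund_form g I y Y Z) x v = cA (g x) a v Z Y + hA h v Y (I x *v Z)"
proof -
  have "((\<lambda>y. Y \<bullet> (g y *v (I y *v Z))) has_derivative
     (\<lambda>v. Y \<bullet> (g x *v (a v *v Z) + h v *v (I x *v Z)))) (at x)"
    using has_derivative_inner[OF has_derivative_const[of Y] D_mv[OF dg D_mvc[OF dI]]] by simp
  then have "frechet_derivative (\<lambda>y. fund_form g I y Y Z) (at x) = (\<lambda>v. Y \<bullet> (g x *v (a v *v Z) + h v *v (I x *v Z)))"
    unfolding fund_form_def gf_def by (rule frechet_derivative_at[symmetric])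
  then show ?thesis by (simp add: dd_def cA_def hA_def inner_add_right)
qed

lemma d2_ff:
  fixes g I :: "real^4 \<Rightarrow> real^4^4"
  assumes dg: "(g has_derivative h) (at x)" and dI: "(I has_derivative a) (at x)"
  shows "d2 (fund_form g I) x X Y Z = domf (g x) (I x) h a X Y Z"
  unfolding d2_def deriv_ff[OF dg dI] domf_def by simp


lemma herm_deriv:
  fixes g K :: "real^4 \<Rightarrow> real^4^4"
  assumes dg: "(g has_derivative h) (at x)" and dK: "(K has_derivative c) (at x)"
    and oU: "open U" and xU: "x \<in> U"
    and hK: "\<And>y X Y. y \<in> U \<Longrightarrow> (K y *v X) \<bullet> (g y *v (K y *v Y)) = X \<bullet> (g y *v Y)"
    and gsx: "transpose (g x) = g x"
  shows "cA (g x) c A B (K x *v C) + hA h A (K x *v B) (K x *v C) + cA (g x) c A C (K x *v B) - hA h A B C = 0"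
proof -
  have d: "((\<lambda>y. (K y *v B) \<bullet> (g y *v (K y *v C)) - B \<bullet> (g y *v C)) has_derivative
     (\<lambda>v. ((K x *v B) \<bullet> (g x *v (c v *v C) + h v *v (K x *v C)) + (c v *v B) \<bullet> (g x *v (K x *v C)))
         - (B \<bullet> (h v *v C)))) (at x)"
    using has_derivative_diff[OF has_derivative_inner[OF D_mvc[OF dK, of B] D_mv[OF dg D_mvc[OF dK, of C]]]
          has_derivative_inner[OF has_derivative_const[of B] D_mvc[OF dg, of C]]] by simp
  have z: "((K x *v B) \<bullet> (g x *v (c A *v C) + h A *v (K x *v C)) + (c A *v B) \<bullet> (g x *v (K x *v C)))
         - (B \<bullet> (h A *v C)) = 0"
    by (rule zero_deriv[OF d oU xU]) (simp add: hK)
  have s: "(c A *v B) \<bullet> (g x *v (K x *v C)) = (K x *v C) \<bullet> (g x *v (c A *v B))"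
    by (rule gsym_swap[OF gsx])
  show ?thesis using z s unfolding cA_def hA_def by (simp add: inner_add_right)
qed

lemma nij_deriv:
  fixes g K :: "real^4 \<Rightarrow> real^4^4"
  assumes dK: "(K has_derivative c) (at x)"
    and nK: "\<And>X Y. nijenhuis K (\<lambda>_. X) (\<lambda>_. Y) x = 0"
    and gsx: "transpose (g x) = g x" and K2: "K x ** K x = - mat 1"
    and Kg: "\<And>X Y. (K x *v X) \<bullet> (g x *v (K x *v Y)) = X \<bullet> (g x *v Y)"
  shows "cA (g x) c (K x *v A) B C - cA (g x) c (K x *v B) A C - cA (g x) c B A (K x *v C) + cA (g x) c A B (K x *v C) = 0"
proof -
  have fd: "frechet_derivative (\<lambda>y. K y *v W) (at x) = (\<lambda>v. c v *v W)" for W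
    by (rule frechet_derivative_at[OF D_mvc[OF dK], symmetric])
  have N: "c (K x *v A) *v B - c (K x *v B) *v A + K x *v (c B *v A) - K x *v (c A *v B) = 0"
    using nK[of A B] by (simp add: nijenhuis_def lie_bracket_def dd_def fd mv_diff mv_uminus)
  then have "C \<bullet> (g x *v (c (K x *v A) *v B - c (K x *v B) *v A + K x *v (c B *v A) - K x *v (c A *v B))) = 0"
    by simp
  then have "C \<bullet> (g x *v (c (K x *v A) *v B)) - C \<bullet> (g x *v (c (K x *v B) *v A))
      + C \<bullet> (g x *v (K x *v (c B *v A))) - C \<bullet> (g x *v (K x *v (c A *v B))) = 0"
    by (simp add: mv_add mv_diff inner_add_right inner_diff_right)
  moreover have "C \<bullet> (g x *v (K x *v W)) = - ((K x *v C) \<bullet> (g x *v W))" for W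
    by (rule skew[OF gsx K2 Kg])
  ultimately show ?thesis unfolding cA_def by simp
qed

lemma dc_eq:
  fixes g K :: "real^4 \<Rightarrow> real^4^4"
  assumes dg: "(g has_derivative h) (at x)" and dK: "(K has_derivative c) (at x)"
    and oU: "open U" and xU: "x \<in> U" and K2: "K x ** K x = - mat 1"
    and hK: "\<And>y X Y. y \<in> U \<Longrightarrow> (K y *v X) \<bullet> (g y *v (K y *v Y)) = X \<bullet> (g y *v Y)"
  shows "dc K (fund_form g K) x X Y Z = Hf (g x) (K x) h c X Y Z"
proof -
  have eqf: "frechet_derivative (\<lambda>y. act2 K (fund_form g K) y B C) (at x)
      = frechet_derivative (\<lambda>y. fund_form g K y B C) (at x)" for B C
  proof -
    have d: "(\<lambda>y. fund_form g K y B C) differentiable at x"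
      using ff_hasderiv[OF dg dK] differentiableI by blast
    have e: "fund_form g K y B C = act2 K (fund_form g K) y B C" if "y \<in> U" for y
      unfolding act2_def fund_form_def gf_def using hK[OF that, of B "K y *v C"] by simp
    show ?thesis
      by (rule sym, rule frechet_derivative_transform_within_open[OF d oU xU e])
  qed
  have "dc K (fund_form g K) x X Y Z = d2 (fund_form g K) x (- (K x *v X)) (- (K x *v Y)) (- (K x *v Z))"
    unfolding dc_def act3_def inv_neg[OF K2] d2_def dd_def eqf by (simp add: neg_mat_vec)
  also have "\<dots> = Hf (g x) (K x) h c X Y Z"
    unfolding d2_ff[OF dg dK] Hf_def ..
  finally show ?thesis .
qed

lemma pw_extract:
  fixes U :: "(real^4) set" and g I J :: "real^4 \<Rightarrow> real^4^4" and \<theta> :: "real^4 \<Rightarrow> real^4"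
  assumes GKa: "gen_kahler U g I J" and xU: "x \<in> U"
    and lee: "\<forall>x\<in>U. \<forall>X Y Z. d2 (fund_form g I) x X Y Z = wedge12 \<theta> (fund_form g I) x X Y Z"
  shows "transpose (g x) = g x"
    and "\<And>X. X \<noteq> 0 \<Longrightarrow> X \<bullet> (g x *v X) > 0"
    and "I x ** I x = - mat 1" and "\<And>X Y. (I x *v X) \<bullet> (g x *v (I x *v Y)) = X \<bullet> (g x *v Y)"
    and "J x ** J x = - mat 1" and "\<And>X Y. (J x *v X) \<bullet> (g x *v (J x *v Y)) = X \<bullet> (g x *v Y)"
    and "linear (Dm g x)" and "linear (Dm I x)" and "linear (Dm J x)"
    and "\<And>v Y Z. hA (Dm g x) v Y Z = hA (Dm g x) v Z Y"
    and "\<And>A B C. cA (g x) (Dm I x) A B (I x *v C) + hA (Dm g x) A (I x *v B) (I x *v C) + cA (g x) (Dm I x) A C (I x *v B) - hA (Dm g x) A B C = 0"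
    and "\<And>A B C. cA (g x) (Dm J x) A B (J x *v C) + hA (Dm g x) A (J x *v B) (J x *v C) + cA (g x) (Dm J x) A C (J x *v B) - hA (Dm g x) A B C = 0"
    and "\<And>A B C. cA (g x) (Dm I x) (I x *v A) B C - cA (g x) (Dm I x) (I x *v B) A C - cA (g x) (Dm I x) B A (I x *v C) + cA (g x) (Dm I x) A B (I x *v C) = 0"
    and "\<And>A B C. cA (g x) (Dm J x) (J x *v A) B C - cA (g x) (Dm J x) (J x *v B) A C - cA (g x) (Dm J x) B A (J x *v C) + cA (g x) (Dm J x) A B (J x *v C) = 0"
    and "\<And>X Y Z. Hf (g x) (I x) (Dm g x) (Dm I x) X Y Z = - Hf (g x) (J x) (Dm g x) (Dm J x) X Y Z"
    and "\<And>X Y Z. domf (g x) (I x) (Dm g x) (Dm I x) X Y Z = (\<theta> x \<bullet> X) * (Y \<bullet> (g x *v (I x *v Z)))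
            + (\<theta> x \<bullet> Y) * (Z \<bullet> (g x *v (I x *v X))) + (\<theta> x \<bullet> Z) * (X \<bullet> (g x *v (I x *v Y)))"
    and "dd (angle_fun I J) x v = trace (Dm I x v ** J x + I x ** Dm J x v) / 4"
proof -
  have oU: "open U" and rm: "riem_metric U g" and icI: "integrable_cs U I" and icJ: "integrable_cs U J"
    and hI: "hermitian U g I" and hJ: "hermitian U g J"
    and Hc: "\<forall>x\<in>U. \<forall>X Y Z. dc I (fund_form g I) x X Y Z = - dc J (fund_form g J) x X Y Z"
    using GKa unfolding gen_kahler_def Let_def by auto
  have sg: "smooth_endo U g" and gs: "\<And>y. y \<in> U \<Longrightarrow> transpose (g y) = g y"
    and gp: "\<And>y X. y \<in> U \<Longrightarrow> X \<noteq> 0 \<Longrightarrow> gf g y X X > 0"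
    using rm unfolding riem_metric_def by auto
  have sI: "smooth_endo U I" and I2y: "\<And>y. y \<in> U \<Longrightarrow> I y ** I y = - mat 1"
    and nI: "\<And>X Y. nijenhuis I (\<lambda>_. X) (\<lambda>_. Y) x = 0"
    using icI xU unfolding integrable_cs_def by auto
  have sJ: "smooth_endo U J" and J2y: "\<And>y. y \<in> U \<Longrightarrow> J y ** J y = - mat 1"
    and nJ: "\<And>X Y. nijenhuis J (\<lambda>_. X) (\<lambda>_. Y) x = 0"
    using icJ xU unfolding integrable_cs_def by auto
  have hIy: "\<And>y X Y. y \<in> U \<Longrightarrow> (I y *v X) \<bullet> (g y *v (I y *v Y)) = X \<bullet> (g y *v Y)"
    using hI unfolding hermitian_def gf_def by auto
  have hJy: "\<And>y X Y. y \<in> U \<Longrightarrow> (J y *v X) \<bullet> (g y *v (J y *v Y)) = X \<bullet> (g y *v Y)"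
    using hJ unfolding hermitian_def gf_def by auto
  have dg: "(g has_derivative Dm g x) (at x)" by (rule smooth_hasderiv[OF sg oU xU])
  have dI: "(I has_derivative Dm I x) (at x)" by (rule smooth_hasderiv[OF sI oU xU])
  have dJ: "(J has_derivative Dm J x) (at x)" by (rule smooth_hasderiv[OF sJ oU xU])
  show gsx: "transpose (g x) = g x" using gs xU by blast
  show "X \<bullet> (g x *v X) > 0" if "X \<noteq> 0" for X using gp[OF xU that] unfolding gf_def .
  show I2: "I x ** I x = - mat 1" using I2y xU by blast
  show Ig: "(I x *v X) \<bullet> (g x *v (I x *v Y)) = X \<bullet> (g x *v Y)" for X Y using hIy xU by blast
  show J2: "J x ** J x = - mat 1" using J2y xU by blast
  show Jg: "(J x *v X) \<bullet> (g x *v (J x *v Y)) = X \<bullet> (g x *v Y)" for X Y using hJy xU by blast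
  show "linear (Dm g x)" using dg by (rule has_derivative_linear)
  show "linear (Dm I x)" using dI by (rule has_derivative_linear)
  show "linear (Dm J x)" using dJ by (rule has_derivative_linear)
  have sw: "\<And>X Y. X \<bullet> (g x *v Y) = Y \<bullet> (g x *v X)" by (rule gsym_swap[OF gsx])
  show "hA (Dm g x) v Y Z = hA (Dm g x) v Z Y" for v Y Z
  proof -
    have d: "((\<lambda>y. Y \<bullet> (g y *v Z) - Z \<bullet> (g y *v Y)) has_derivative
       (\<lambda>v. Y \<bullet> (Dm g x v *v Z) - Z \<bullet> (Dm g x v *v Y))) (at x)"
      using has_derivative_diff[OF has_derivative_inner[OF has_derivative_const[of Y] D_mvc[OF dg, of Z]]
          has_derivative_inner[OF has_derivative_const[of Z] D_mvc[OF dg, of Y]]] by simp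
    have "Y \<bullet> (Dm g x v *v Z) - Z \<bullet> (Dm g x v *v Y) = 0"
      by (rule zero_deriv[OF d oU xU]) (simp add: gsym_swap[OF gs])
    then show ?thesis unfolding hA_def by simp
  qed
  show "cA (g x) (Dm I x) A B (I x *v C) + hA (Dm g x) A (I x *v B) (I x *v C) + cA (g x) (Dm I x) A C (I x *v B) - hA (Dm g x) A B C = 0" for A B C
    by (rule herm_deriv[OF dg dI oU xU hIy gsx])
  show "cA (g x) (Dm J x) A B (J x *v C) + hA (Dm g x) A (J x *v B) (J x *v C) + cA (g x) (Dm J x) A C (J x *v B) - hA (Dm g x) A B C = 0" for A B C
    by (rule herm_deriv[OF dg dJ oU xU hJy gsx])
  show "cA (g x) (Dm I x) (I x *v A) B C - cA (g x) (Dm I x) (I x *v B) A C - cA (g x) (Dm I x) B A (I x *v C) + cA (g x) (Dm I x) A B (I x *v C) = 0" for A B C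
    by (rule nij_deriv[where g=g, OF dI nI gsx I2 Ig])
  show "cA (g x) (Dm J x) (J x *v A) B C - cA (g x) (Dm J x) (J x *v B) A C - cA (g x) (Dm J x) B A (J x *v C) + cA (g x) (Dm J x) A B (J x *v C) = 0" for A B C
    by (rule nij_deriv[where g=g, OF dJ nJ gsx J2 Jg])
  show "Hf (g x) (I x) (Dm g x) (Dm I x) X Y Z = - Hf (g x) (J x) (Dm g x) (Dm J x) X Y Z" for X Y Z
    using Hc xU dc_eq[OF dg dI oU xU I2 hIy, of X Y Z] dc_eq[OF dg dJ oU xU J2 hJy, of X Y Z] by simp
  show "domf (g x) (I x) (Dm g x) (Dm I x) X Y Z = (\<theta> x \<bullet> X) * (Y \<bullet> (g x *v (I x *v Z)))
            + (\<theta> x \<bullet> Y) * (Z \<bullet> (g x *v (I x *v X))) + (\<theta> x \<bullet> Z) * (X \<bullet> (g x *v (I x *v Y)))" for X Y Z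
    using lee xU d2_ff[OF dg dI, of X Y Z] unfolding wedge12_def fund_form_def gf_def by simp
  show "dd (angle_fun I J) x v = trace (Dm I x v ** J x + I x ** Dm J x v) / 4"
  proof -
    have "((\<lambda>y. trace (I y ** J y) / 4) has_derivative (\<lambda>v. trace (I x ** Dm J x v + Dm I x v ** J x) / 4)) (at x)"
      using bounded_linear.has_derivative[OF bounded_linear_divide[of 4]
          bounded_linear.has_derivative[OF bl_trace D_mm[OF dI dJ]]] by simp
    then have "frechet_derivative (angle_fun I J) (at x) = (\<lambda>v. trace (I x ** Dm J x v + Dm I x v ** J x) / 4)"
      unfolding angle_fun_def by (rule frechet_derivative_at[symmetric])
    then show ?thesis by (simp add: dd_def add.commute)
  qed
qed

lemma mv_scaleR_left: "(c *\<^sub>R A) *v x = c *\<^sub>R (A *v (x::real^'n))" for A :: "real^'n^'m"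
  by (simp add: scaleR_matrix_vector_assoc)

lemma Gam_lin:
  assumes lh: "linear h"
  shows "Gam h v (x + y) z = Gam h v x z + Gam h v y z"
    and "Gam h v (c *\<^sub>R x) z = c * Gam h v x z"
    and "Gam h v z (x + y) = Gam h v z x + Gam h v z y"
    and "Gam h v z (c *\<^sub>R x) = c * Gam h v z x"
    and "Gam h v (- x) z = - Gam h v x z"
    and "Gam h v z (- x) = - Gam h v z x"
  using lh by (simp_all add: Gam_def hA_def linear_add linear_scale linear_neg mv_add mv_scaleR
      matrix_vector_mult_add_rdistrib mv_scaleR_left neg_mat_vec mv_uminus inner_add_left inner_add_right
      field_simps)

definition Hs :: "real^4^4 \<Rightarrow> real^4^4 \<Rightarrow> real^4 \<Rightarrow> real^4 \<Rightarrow> real^4 \<Rightarrow> real^4 \<Rightarrow> real" where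
  "Hs g I th X Y Z = - ((th \<bullet> (I *v X)) * (Y \<bullet> (g *v (I *v Z))) + (th \<bullet> (I *v Y)) * (Z \<bullet> (g *v (I *v X)))
                      + (th \<bullet> (I *v Z)) * (X \<bullet> (g *v (I *v Y))))"

lemma Hs_lin:
  shows "Hs g I th (x + y) Y Z = Hs g I th x Y Z + Hs g I th y Y Z"
    and "Hs g I th (c *\<^sub>R x) Y Z = c * Hs g I th x Y Z"
    and "Hs g I th X (x + y) Z = Hs g I th X x Z + Hs g I th X y Z"
    and "Hs g I th X (c *\<^sub>R x) Z = c * Hs g I th X x Z"
    and "Hs g I th X Y (x + y) = Hs g I th X Y x + Hs g I th X Y y"
    and "Hs g I th X Y (c *\<^sub>R x) = c * Hs g I th X Y x"
    and "Hs g I th (- x) Y Z = - Hs g I th x Y Z"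
    and "Hs g I th X (- x) Z = - Hs g I th X x Z"
    and "Hs g I th X Y (- x) = - Hs g I th X Y x"
  by (simp_all add: Hs_def mv_add mv_scaleR mv_uminus inner_add_left inner_add_right algebra_simps)

lemma pw_generic:
  fixes g I J :: "real^4^4" and h a b :: "real^4 \<Rightarrow> real^4^4" and th :: "real^4"
  assumes gsym: "transpose g = g"
    and I2: "I ** I = - mat 1" and Ig: "\<And>X Y. (I *v X) \<bullet> (g *v (I *v Y)) = X \<bullet> (g *v Y)"
    and J2: "J ** J = - mat 1"
    and lh: "linear h" and la: "linear a" and lb: "linear b"
    and hsym: "\<And>v Y Z. hA h v Y Z = hA h v Z Y"
    and hermI: "\<And>A B C. cA g a A B (I *v C) + hA h A (I *v B) (I *v C) + cA g a A C (I *v B) - hA h A B C = 0"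
    and hermJ: "\<And>A B C. cA g b A B (J *v C) + hA h A (J *v B) (J *v C) + cA g b A C (J *v B) - hA h A B C = 0"
    and nijI: "\<And>A B C. cA g a (I *v A) B C - cA g a (I *v B) A C - cA g a B A (I *v C) + cA g a A B (I *v C) = 0"
    and nijJ: "\<And>A B C. cA g b (J *v A) B C - cA g b (J *v B) A C - cA g b B A (J *v C) + cA g b A B (J *v C) = 0"
    and GK: "\<And>X Y Z. Hf g I h a X Y Z = - Hf g J h b X Y Z"
    and Lee: "\<And>X Y Z. domf g I h a X Y Z = (th \<bullet> X) * (Y \<bullet> (g *v (I *v Z))) + (th \<bullet> Y) * (Z \<bullet> (g *v (I *v X)))
                      + (th \<bullet> Z) * (X \<bullet> (g *v (I *v Y)))"
    and ofr: "f1 \<bullet> (g *v f1) = 1" "f1 \<bullet> (g *v f2) = 0" "f1 \<bullet> (g *v f3) = 0" "f1 \<bullet> (g *v f4) = 0"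
     "f2 \<bullet> (g *v f1) = 0" "f2 \<bullet> (g *v f2) = 1" "f2 \<bullet> (g *v f3) = 0" "f2 \<bullet> (g *v f4) = 0"
     "f3 \<bullet> (g *v f1) = 0" "f3 \<bullet> (g *v f2) = 0" "f3 \<bullet> (g *v f3) = 1" "f3 \<bullet> (g *v f4) = 0"
     "f4 \<bullet> (g *v f1) = 0" "f4 \<bullet> (g *v f2) = 0" "f4 \<bullet> (g *v f3) = 0" "f4 \<bullet> (g *v f4) = 1"
  shows "trace (a v ** J + I ** b v) =
     (f1 \<bullet> (g *v (a v *v (J *v f1))) + f2 \<bullet> (g *v (a v *v (J *v f2))) + f3 \<bullet> (g *v (a v *v (J *v f3))) + f4 \<bullet> (g *v (a v *v (J *v f4))))
   + (f1 \<bullet> (g *v (b v *v (I *v f1))) + f2 \<bullet> (g *v (b v *v (I *v f2))) + f3 \<bullet> (g *v (b v *v (I *v f3))) + f4 \<bullet> (g *v (b v *v (I *v f4))))"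
    and "\<And>X Y Z. Hf g I h a X Y Z = Hs g I th X Y Z"
    and "\<And>X Y Z. Hf g J h b X Y Z = - Hs g I th X Y Z"
proof -
  note tr = frame_span_trace(2)[OF ofr]
  have "trace (a v ** J + I ** b v) = trace (a v ** J) + trace (b v ** I)"
    by (simp only: trace_add trace_mul_sym[of I "b v"])
  also have "trace (a v ** J) = (f1 \<bullet> (g *v (a v *v (J *v f1))) + f2 \<bullet> (g *v (a v *v (J *v f2))) + f3 \<bullet> (g *v (a v *v (J *v f3))) + f4 \<bullet> (g *v (a v *v (J *v f4))))"
    unfolding tr[of "a v ** J"] by (simp only: matrix_vector_mul_assoc)
  also have "trace (b v ** I) = (f1 \<bullet> (g *v (b v *v (I *v f1))) + f2 \<bullet> (g *v (b v *v (I *v f2))) + f3 \<bullet> (g *v (b v *v (I *v f3))) + f4 \<bullet> (g *v (b v *v (I *v f4))))"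
    unfolding tr[of "b v ** I"] by (simp only: matrix_vector_mul_assoc)
  finally show "trace (a v ** J + I ** b v) =
     (f1 \<bullet> (g *v (a v *v (J *v f1))) + f2 \<bullet> (g *v (a v *v (J *v f2))) + f3 \<bullet> (g *v (a v *v (J *v f3))) + f4 \<bullet> (g *v (a v *v (J *v f4))))
   + (f1 \<bullet> (g *v (b v *v (I *v f1))) + f2 \<bullet> (g *v (b v *v (I *v f2))) + f3 \<bullet> (g *v (b v *v (I *v f3))) + f4 \<bullet> (g *v (b v *v (I *v f4))))" .
  show HI: "Hf g I h a X Y Z = Hs g I th X Y Z" for X Y Z
  proof -
    have "Hf g I h a X Y Z = domf g I h a (- (I *v X)) (- (I *v Y)) (- (I *v Z))" by (simp add: Hf_def)
    also have "\<dots> = Hs g I th X Y Z"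
      unfolding Lee Hs_def by (simp add: mv_uminus Ig)
    finally show ?thesis .
  qed
  show "Hf g J h b X Y Z = - Hs g I th X Y Z" for X Y Z
    using GK[of X Y Z] HI[of X Y Z] by simp
qed

lemma pw_frame:
  fixes g I J :: "real^4^4" and h a b :: "real^4 \<Rightarrow> real^4^4" and th :: "real^4"
  assumes gsym: "transpose g = g"
    and I2: "I ** I = - mat 1" and Ig: "\<And>X Y. (I *v X) \<bullet> (g *v (I *v Y)) = X \<bullet> (g *v Y)"
    and J2: "J ** J = - mat 1" and Jg: "\<And>X Y. (J *v X) \<bullet> (g *v (J *v Y)) = X \<bullet> (g *v Y)"
    and lh: "linear h" and la: "linear a" and lb: "linear b"
    and hsym: "\<And>v Y Z. hA h v Y Z = hA h v Z Y"
    and hermI: "\<And>A B C. cA g a A B (I *v C) + hA h A (I *v B) (I *v C) + cA g a A C (I *v B) - hA h A B C = 0"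
    and hermJ: "\<And>A B C. cA g b A B (J *v C) + hA h A (J *v B) (J *v C) + cA g b A C (J *v B) - hA h A B C = 0"
    and nijI: "\<And>A B C. cA g a (I *v A) B C - cA g a (I *v B) A C - cA g a B A (I *v C) + cA g a A B (I *v C) = 0"
    and nijJ: "\<And>A B C. cA g b (J *v A) B C - cA g b (J *v B) A C - cA g b B A (J *v C) + cA g b A B (J *v C) = 0"
    and GK: "\<And>X Y Z. Hf g I h a X Y Z = - Hf g J h b X Y Z"
    and Lee: "\<And>X Y Z. domf g I h a X Y Z = (th \<bullet> X) * (Y \<bullet> (g *v (I *v Z))) + (th \<bullet> Y) * (Z \<bullet> (g *v (I *v X)))
                      + (th \<bullet> Z) * (X \<bullet> (g *v (I *v Y)))"
    and ofr: "f1 \<bullet> (g *v f1) = 1" "f1 \<bullet> (g *v f2) = 0" "f1 \<bullet> (g *v f3) = 0" "f1 \<bullet> (g *v f4) = 0"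
     "f2 \<bullet> (g *v f1) = 0" "f2 \<bullet> (g *v f2) = 1" "f2 \<bullet> (g *v f3) = 0" "f2 \<bullet> (g *v f4) = 0"
     "f3 \<bullet> (g *v f1) = 0" "f3 \<bullet> (g *v f2) = 0" "f3 \<bullet> (g *v f3) = 1" "f3 \<bullet> (g *v f4) = 0"
     "f4 \<bullet> (g *v f1) = 0" "f4 \<bullet> (g *v f2) = 0" "f4 \<bullet> (g *v f3) = 0" "f4 \<bullet> (g *v f4) = 1"
    and If: "I *v f1 = f2" "I *v f2 = - f1" "I *v f3 = f4" "I *v f4 = - f3"
    and vf: "v = f1 \<or> v = f2 \<or> v = f3 \<or> v = f4"
  shows "trace (a v ** J + I ** b v) = 2 * (th \<bullet> ((I ** J - J ** I) *v v))"
proof -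
  note gen = pw_generic[OF gsym I2 Ig J2 lh la lb hsym hermI hermJ nijI nijJ GK Lee ofr]
  have LAI: "cA g a v Y Z = - Gam h v (I *v Y) Z - Gam h v Y (I *v Z)
            + (Hf g I h a v Z (I *v Y) + Hf g I h a v (I *v Z) Y) / 2" for Y Z
    by (rule lemA[OF lh la I2 hsym hermI nijI])
  have LAJ: "cA g b v Y Z = - Gam h v (J *v Y) Z - Gam h v Y (J *v Z)
            + (Hf g J h b v Z (J *v Y) + Hf g J h b v (J *v Z) Y) / 2" for Y Z
    by (rule lemA[OF lh lb J2 hsym hermJ nijJ])
  have sw: "\<And>X Y. X \<bullet> (g *v Y) = Y \<bullet> (g *v X)" by (rule gsym_swap[OF gsym])
  have Jsk: "X \<bullet> (g *v (J *v Y)) = - (Y \<bullet> (g *v (J *v X)))" for X Y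
  proof -
    have "(J *v X) \<bullet> (g *v (J *v (J *v Y))) = X \<bullet> (g *v (J *v Y))" by (rule Jg)
    moreover have "J *v (J *v Y) = - Y" by (simp add: matrix_vector_mul_assoc J2 neg_mat_vec)
    ultimately show ?thesis using sw[of "J *v X" Y] by (simp add: mv_uminus)
  qed
  define j where "j = (\<lambda>p q. p \<bullet> (g *v (J *v q)))"
  note sp = frame_span_trace(1)[OF ofr]
  have Jf: "J *v f1 = j f1 f1 *\<^sub>R f1 + j f2 f1 *\<^sub>R f2 + j f3 f1 *\<^sub>R f3 + j f4 f1 *\<^sub>R f4"
     "J *v f2 = j f1 f2 *\<^sub>R f1 + j f2 f2 *\<^sub>R f2 + j f3 f2 *\<^sub>R f3 + j f4 f2 *\<^sub>R f4"
     "J *v f3 = j f1 f3 *\<^sub>R f1 + j f2 f3 *\<^sub>R f2 + j f3 f3 *\<^sub>R f3 + j f4 f3 *\<^sub>R f4"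
     "J *v f4 = j f1 f4 *\<^sub>R f1 + j f2 f4 *\<^sub>R f2 + j f3 f4 *\<^sub>R f3 + j f4 f4 *\<^sub>R f4"
    unfolding j_def by (rule sp)+
  have jsk: "j p q = - j q p" for p q unfolding j_def by (rule Jsk)
  have jd: "j f1 f1 = 0" "j f2 f2 = 0" "j f3 f3 = 0" "j f4 f4 = 0" using jsk by (metis add.inverse_unique add_cancel_right_right neg_equal_zero)+
  have js: "j f2 f1 = - j f1 f2" "j f3 f1 = - j f1 f3" "j f4 f1 = - j f1 f4" "j f3 f2 = - j f2 f3" "j f4 f2 = - j f2 f4" "j f4 f3 = - j f3 f4"
    using jsk by blast+
  have c1: "trace (a v ** J + I ** b v) = 2 * (th \<bullet> ((I ** J - J ** I) *v v))" if vk: "v = f1"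
    unfolding gen(1) cA_def[symmetric]
    unfolding LAI LAJ
    unfolding gen(2) gen(3)
    unfolding vk
    apply (simp only: If Jf Gam_lin[OF lh] Hs_lin mv_add mv_scaleR mv_uminus jd js)
    apply (simp only: Hs_def If mv_uminus inner_minus_right inner_minus_left ofr matrix_vector_mult_diff_rdistrib
       matrix_vector_mul_assoc[symmetric] Jf mv_add mv_scaleR inner_add_right inner_scaleR_right jd js inner_diff_right)
    apply (simp add: field_simps)
    done
  have c2: "trace (a v ** J + I ** b v) = 2 * (th \<bullet> ((I ** J - J ** I) *v v))" if vk: "v = f2"
    unfolding gen(1) cA_def[symmetric]
    unfolding LAI LAJ
    unfolding gen(2) gen(3)
    unfolding vk
    apply (simp only: If Jf Gam_lin[OF lh] Hs_lin mv_add mv_scaleR mv_uminus jd js)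
    apply (simp only: Hs_def If mv_uminus inner_minus_right inner_minus_left ofr matrix_vector_mult_diff_rdistrib
       matrix_vector_mul_assoc[symmetric] Jf mv_add mv_scaleR inner_add_right inner_scaleR_right jd js inner_diff_right)
    apply (simp add: field_simps)
    done
  have c3: "trace (a v ** J + I ** b v) = 2 * (th \<bullet> ((I ** J - J ** I) *v v))" if vk: "v = f3"
    unfolding gen(1) cA_def[symmetric]
    unfolding LAI LAJ
    unfolding gen(2) gen(3)
    unfolding vk
    apply (simp only: If Jf Gam_lin[OF lh] Hs_lin mv_add mv_scaleR mv_uminus jd js)
    apply (simp only: Hs_def If mv_uminus inner_minus_right inner_minus_left ofr matrix_vector_mult_diff_rdistrib
       matrix_vector_mul_assoc[symmetric] Jf mv_add mv_scaleR inner_add_right inner_scaleR_right jd js inner_diff_right)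
    apply (simp add: field_simps)
    done
  have c4: "trace (a v ** J + I ** b v) = 2 * (th \<bullet> ((I ** J - J ** I) *v v))" if vk: "v = f4"
    unfolding gen(1) cA_def[symmetric]
    unfolding LAI LAJ
    unfolding gen(2) gen(3)
    unfolding vk
    apply (simp only: If Jf Gam_lin[OF lh] Hs_lin mv_add mv_scaleR mv_uminus jd js)
    apply (simp only: Hs_def If mv_uminus inner_minus_right inner_minus_left ofr matrix_vector_mult_diff_rdistrib
       matrix_vector_mul_assoc[symmetric] Jf mv_add mv_scaleR inner_add_right inner_scaleR_right jd js inner_diff_right)
    apply (simp add: field_simps)
    done
  show ?thesis using vf c1 c2 c3 c4 by blast
qed

lemma vec4_eq: "u1 = w1 \<Longrightarrow> u2 = w2 \<Longrightarrow> u3 = w3 \<Longrightarrow> u4 = w4 \<Longrightarrow>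
  u1 *\<^sub>R f1 + u2 *\<^sub>R f2 + u3 *\<^sub>R f3 + u4 *\<^sub>R f4 = w1 *\<^sub>R f1 + w2 *\<^sub>R f2 + w3 *\<^sub>R f3 + w4 *\<^sub>R (f4::real^4)"
  by simp

lemma orient:
  fixes g I J :: "real^4^4"
  assumes gsym: "transpose g = g"
    and I2: "I ** I = - mat 1" and Ig: "\<And>X Y. (I *v X) \<bullet> (g *v (I *v Y)) = X \<bullet> (g *v Y)"
    and J2: "J ** J = - mat 1" and Jg: "\<And>X Y. (J *v X) \<bullet> (g *v (J *v Y)) = X \<bullet> (g *v Y)"
    and ofr: "f1 \<bullet> (g *v f1) = 1" "f1 \<bullet> (g *v f2) = 0" "f1 \<bullet> (g *v f3) = 0" "f1 \<bullet> (g *v f4) = 0"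
     "f2 \<bullet> (g *v f1) = 0" "f2 \<bullet> (g *v f2) = 1" "f2 \<bullet> (g *v f3) = 0" "f2 \<bullet> (g *v f4) = 0"
     "f3 \<bullet> (g *v f1) = 0" "f3 \<bullet> (g *v f2) = 0" "f3 \<bullet> (g *v f3) = 1" "f3 \<bullet> (g *v f4) = 0"
     "f4 \<bullet> (g *v f1) = 0" "f4 \<bullet> (g *v f2) = 0" "f4 \<bullet> (g *v f3) = 0" "f4 \<bullet> (g *v f4) = 1"
    and If: "I *v f1 = f2" "I *v f2 = - f1" "I *v f3 = f4" "I *v f4 = - f3"
    and inv: "invertible (I ** J - J ** I)"
  shows "(I ** J - J ** I) *v ((I ** J - J ** I) *v X) = (4 * ((trace (I ** J) / 4)^2 - 1)) *\<^sub>R X"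
proof -
  have sw: "\<And>X Y. X \<bullet> (g *v Y) = Y \<bullet> (g *v X)" by (rule gsym_swap[OF gsym])
  have JJ: "J *v (J *v Y) = - Y" for Y by (simp add: matrix_vector_mul_assoc J2 neg_mat_vec)
  have Jsk: "X \<bullet> (g *v (J *v Y)) = - (Y \<bullet> (g *v (J *v X)))" for X Y
  proof -
    have "(J *v X) \<bullet> (g *v (J *v (J *v Y))) = X \<bullet> (g *v (J *v Y))" by (rule Jg)
    then show ?thesis using sw[of "J *v X" Y] by (simp add: mv_uminus JJ)
  qed
  define j where "j = (\<lambda>p q. p \<bullet> (g *v (J *v q)))"
  note sp = frame_span_trace(1)[OF ofr]
  note trf = frame_span_trace(2)[OF ofr]
  have Jf: "J *v f1 = j f1 f1 *\<^sub>R f1 + j f2 f1 *\<^sub>R f2 + j f3 f1 *\<^sub>R f3 + j f4 f1 *\<^sub>R f4"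
     "J *v f2 = j f1 f2 *\<^sub>R f1 + j f2 f2 *\<^sub>R f2 + j f3 f2 *\<^sub>R f3 + j f4 f2 *\<^sub>R f4"
     "J *v f3 = j f1 f3 *\<^sub>R f1 + j f2 f3 *\<^sub>R f2 + j f3 f3 *\<^sub>R f3 + j f4 f3 *\<^sub>R f4"
     "J *v f4 = j f1 f4 *\<^sub>R f1 + j f2 f4 *\<^sub>R f2 + j f3 f4 *\<^sub>R f3 + j f4 f4 *\<^sub>R f4"
    unfolding j_def by (rule sp)+
  have jsk: "j p q = - j q p" for p q unfolding j_def by (rule Jsk)
  have jd: "j f1 f1 = 0" "j f2 f2 = 0" "j f3 f3 = 0" "j f4 f4 = 0" using jsk by (metis add.inverse_unique add_cancel_right_right neg_equal_zero)+
  have js: "j f2 f1 = - j f1 f2" "j f3 f1 = - j f1 f3" "j f4 f1 = - j f1 f4" "j f3 f2 = - j f2 f3" "j f4 f2 = - j f2 f4" "j f4 f3 = - j f3 f4"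
    using jsk by blast+
  define x12 where "x12 = j f1 f2"
  define x13 where "x13 = j f1 f3"
  define x14 where "x14 = j f1 f4"
  define x23 where "x23 = j f2 f3"
  define x24 where "x24 = j f2 f4"
  define x34 where "x34 = j f3 f4"
  note xs = x12_def[symmetric] x13_def[symmetric] x14_def[symmetric] x23_def[symmetric] x24_def[symmetric] x34_def[symmetric]
  note EXP = Jf jd js xs mv_add mv_scaleR mv_uminus inner_add_right inner_scaleR_right inner_minus_right ofr If
  have E: "f1 \<bullet> (g *v (J *v (J *v f1))) = - 1" "f2 \<bullet> (g *v (J *v (J *v f2))) = - 1"
     "f3 \<bullet> (g *v (J *v (J *v f3))) = - 1" "f4 \<bullet> (g *v (J *v (J *v f4))) = - 1"
     "f1 \<bullet> (g *v (J *v (J *v f2))) = 0" "f1 \<bullet> (g *v (J *v (J *v f3))) = 0" "f1 \<bullet> (g *v (J *v (J *v f4))) = 0"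
     "f2 \<bullet> (g *v (J *v (J *v f3))) = 0" "f2 \<bullet> (g *v (J *v (J *v f4))) = 0" "f3 \<bullet> (g *v (J *v (J *v f4))) = 0"
    by (simp_all add: JJ mv_uminus ofr)
  note E2 = E[unfolded EXP, simplified]
  define C where "C = I ** J - J ** I"
  have Cv: "C *v Y = I *v (J *v Y) - J *v (I *v Y)" for Y
    unfolding C_def by (simp add: matrix_vector_mult_diff_rdistrib matrix_vector_mul_assoc)
  have CC:
    "f1 \<bullet> (g *v (C *v f1)) = 0"
    "f1 \<bullet> (g *v (C *v f2)) = 0"
    "f1 \<bullet> (g *v (C *v f3)) = - x23 - x14"
    "f1 \<bullet> (g *v (C *v f4)) = x13 - x24"
    "f2 \<bullet> (g *v (C *v f1)) = 0"
    "f2 \<bullet> (g *v (C *v f2)) = 0"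
    "f2 \<bullet> (g *v (C *v f3)) = x13 - x24"
    "f2 \<bullet> (g *v (C *v f4)) = x14 + x23"
    "f3 \<bullet> (g *v (C *v f1)) = x14 + x23"
    "f3 \<bullet> (g *v (C *v f2)) = x24 - x13"
    "f3 \<bullet> (g *v (C *v f3)) = 0"
    "f3 \<bullet> (g *v (C *v f4)) = 0"
    "f4 \<bullet> (g *v (C *v f1)) = x24 - x13"
    "f4 \<bullet> (g *v (C *v f2)) = - x23 - x14"
    "f4 \<bullet> (g *v (C *v f3)) = 0"
    "f4 \<bullet> (g *v (C *v f4)) = 0"
    by (simp only: Cv EXP mv_diff inner_diff_right; simp add: algebra_simps)+
  have trIJ: "trace (I ** J) = 2 * x12 + 2 * x34"
    by (simp only: trf matrix_vector_mul_assoc[symmetric] EXP; simp add: algebra_simps)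
  have Cspan: "C *v Y = (f1 \<bullet> (g *v (C *v Y))) *\<^sub>R f1 + (f2 \<bullet> (g *v (C *v Y))) *\<^sub>R f2
      + (f3 \<bullet> (g *v (C *v Y))) *\<^sub>R f3 + (f4 \<bullet> (g *v (C *v Y))) *\<^sub>R f4" for Y
    by (rule sp)
  have nz: "x13 - x24 \<noteq> 0 \<or> x14 + x23 \<noteq> 0"
  proof (rule ccontr)
    assume "\<not> ?thesis"
    then have z: "x24 = x13" "x23 = - x14" by auto
    have Cf: "C *v f1 = 0" "C *v f2 = 0" "C *v f3 = 0" "C *v f4 = 0"
      by (subst Cspan; simp add: CC z)+
    have C0: "C *v Y = 0" for Y
    proof -
      have "C *v Y = C *v ((f1 \<bullet> (g *v Y)) *\<^sub>R f1 + (f2 \<bullet> (g *v Y)) *\<^sub>R f2 + (f3 \<bullet> (g *v Y)) *\<^sub>R f3 + (f4 \<bullet> (g *v Y)) *\<^sub>R f4)"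
        using sp[of Y] by simp
      also have "\<dots> = 0" by (simp add: mv_add mv_scaleR Cf)
      finally show ?thesis .
    qed
    from inv obtain B where "B ** C = mat 1" unfolding invertible_def C_def by blast
    then have "f1 = B *v (C *v f1)" by (simp add: matrix_vector_mul_assoc)
    then have "f1 = 0" by (simp add: C0)
    with ofr(1) show False by simp
  qed
  have sa: "(x13 - x24) * (x12 - x34) = 0" "(x13 - x24) * (x13 + x24) = 0" "(x13 - x24) * (x14 - x23) = 0"
     "(x14 + x23) * (x12 - x34) = 0" "(x14 + x23) * (x13 + x24) = 0" "(x14 + x23) * (x14 - x23) = 0"
    using E2 by algebra+
  have a0: "x12 - x34 = 0" "x13 + x24 = 0" "x14 - x23 = 0"
    using nz sa by auto
  have a0': "x34 = x12" "x24 = - x13" "x23 = x14" using a0 by auto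
  have unit: "x12 * x12 + x13 * x13 + x14 * x14 = 1" using E2(1) by simp
  define lam where "lam = 4 * ((trace (I ** J) / 4)^2 - 1)"
  have lam: "lam = 4 * (x12 * x12 - 1)"
    unfolding lam_def trIJ using a0 by (simp add: power2_eq_square algebra_simps)
  have coefl: "fq \<bullet> (g *v (C *v (C *v Y))) = (f1 \<bullet> (g *v (C *v Y))) * (fq \<bullet> (g *v (C *v f1)))
      + (f2 \<bullet> (g *v (C *v Y))) * (fq \<bullet> (g *v (C *v f2))) + (f3 \<bullet> (g *v (C *v Y))) * (fq \<bullet> (g *v (C *v f3)))
      + (f4 \<bullet> (g *v (C *v Y))) * (fq \<bullet> (g *v (C *v f4)))" for fq Y
    by (subst Cspan[of Y]) (simp only: mv_add mv_scaleR inner_add_right inner_scaleR_right)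
  have CCf1: "C *v (C *v f1) = lam *\<^sub>R f1"
  proof -
    have "C *v (C *v f1) = (f1 \<bullet> (g *v (C *v (C *v f1)))) *\<^sub>R f1 + (f2 \<bullet> (g *v (C *v (C *v f1)))) *\<^sub>R f2
      + (f3 \<bullet> (g *v (C *v (C *v f1)))) *\<^sub>R f3 + (f4 \<bullet> (g *v (C *v (C *v f1)))) *\<^sub>R f4" by (rule sp)
    also have "\<dots> = lam *\<^sub>R f1 + 0 *\<^sub>R f2 + 0 *\<^sub>R f3 + 0 *\<^sub>R f4"
      apply (rule vec4_eq)
      apply (unfold coefl CC lam a0')
      subgoal using unit by algebra
      subgoal  by algebra
      subgoal  by algebra
      subgoal  by algebra
      done
    also have "\<dots> = lam *\<^sub>R f1" by simp
    finally show ?thesis .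
  qed
  have CCf2: "C *v (C *v f2) = lam *\<^sub>R f2"
  proof -
    have "C *v (C *v f2) = (f1 \<bullet> (g *v (C *v (C *v f2)))) *\<^sub>R f1 + (f2 \<bullet> (g *v (C *v (C *v f2)))) *\<^sub>R f2
      + (f3 \<bullet> (g *v (C *v (C *v f2)))) *\<^sub>R f3 + (f4 \<bullet> (g *v (C *v (C *v f2)))) *\<^sub>R f4" by (rule sp)
    also have "\<dots> = 0 *\<^sub>R f1 + lam *\<^sub>R f2 + 0 *\<^sub>R f3 + 0 *\<^sub>R f4"
      apply (rule vec4_eq)
      apply (unfold coefl CC lam a0')
      subgoal  by algebra
      subgoal using unit by algebra
      subgoal  by algebra
      subgoal  by algebra
      done
    also have "\<dots> = lam *\<^sub>R f2" by simp
    finally show ?thesis .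
  qed
  have CCf3: "C *v (C *v f3) = lam *\<^sub>R f3"
  proof -
    have "C *v (C *v f3) = (f1 \<bullet> (g *v (C *v (C *v f3)))) *\<^sub>R f1 + (f2 \<bullet> (g *v (C *v (C *v f3)))) *\<^sub>R f2
      + (f3 \<bullet> (g *v (C *v (C *v f3)))) *\<^sub>R f3 + (f4 \<bullet> (g *v (C *v (C *v f3)))) *\<^sub>R f4" by (rule sp)
    also have "\<dots> = 0 *\<^sub>R f1 + 0 *\<^sub>R f2 + lam *\<^sub>R f3 + 0 *\<^sub>R f4"
      apply (rule vec4_eq)
      apply (unfold coefl CC lam a0')
      subgoal  by algebra
      subgoal  by algebra
      subgoal using unit by algebra
      subgoal  by algebra
      done
    also have "\<dots> = lam *\<^sub>R f3" by simp
    finally show ?thesis .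
  qed
  have CCf4: "C *v (C *v f4) = lam *\<^sub>R f4"
  proof -
    have "C *v (C *v f4) = (f1 \<bullet> (g *v (C *v (C *v f4)))) *\<^sub>R f1 + (f2 \<bullet> (g *v (C *v (C *v f4)))) *\<^sub>R f2
      + (f3 \<bullet> (g *v (C *v (C *v f4)))) *\<^sub>R f3 + (f4 \<bullet> (g *v (C *v (C *v f4)))) *\<^sub>R f4" by (rule sp)
    also have "\<dots> = 0 *\<^sub>R f1 + 0 *\<^sub>R f2 + 0 *\<^sub>R f3 + lam *\<^sub>R f4"
      apply (rule vec4_eq)
      apply (unfold coefl CC lam a0')
      subgoal  by algebra
      subgoal  by algebra
      subgoal  by algebra
      subgoal using unit by algebra
      done
    also have "\<dots> = lam *\<^sub>R f4" by simp
    finally show ?thesis .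
  qed
  have "(I ** J - J ** I) *v ((I ** J - J ** I) *v X) = C *v (C *v X)" by (simp add: C_def)
  also have "\<dots> = C *v (C *v ((f1 \<bullet> (g *v X)) *\<^sub>R f1 + (f2 \<bullet> (g *v X)) *\<^sub>R f2 + (f3 \<bullet> (g *v X)) *\<^sub>R f3 + (f4 \<bullet> (g *v X)) *\<^sub>R f4))"
    using sp[of X] by simp
  also have "\<dots> = lam *\<^sub>R ((f1 \<bullet> (g *v X)) *\<^sub>R f1 + (f2 \<bullet> (g *v X)) *\<^sub>R f2 + (f3 \<bullet> (g *v X)) *\<^sub>R f3 + (f4 \<bullet> (g *v X)) *\<^sub>R f4)"
    by (simp add: mv_add mv_scaleR CCf1 CCf2 CCf3 CCf4 scaleR_add_right mult.commute)
  also have "\<dots> = lam *\<^sub>R X" using sp[of X] by simp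
  finally show ?thesis unfolding lam_def .
qed

lemma trace_scaleR: "trace (c *\<^sub>R A) = c * trace (A::real^4^4)"
  by (simp add: trace_def sum_distrib_left)

lemma lin4:
  assumes "linear L" "x = c1 *\<^sub>R f1 + c2 *\<^sub>R f2 + c3 *\<^sub>R f3 + c4 *\<^sub>R f4"
    "L f1 = (0::real)" "L f2 = 0" "L f3 = 0" "L f4 = 0"
  shows "L x = 0"
  using assms by (simp add: linear_add linear_scale)

theorem lemma3p11:
  fixes U :: "(real^4) set" and g I J :: "real^4 \<Rightarrow> real^4^4" and \<theta> :: "real^4 \<Rightarrow> real^4"
  assumes "gen_kahler U g I J"
    and "nondegenerate U g I J"
    and "\<forall>x\<in>U. \<forall>X Y Z. d2 (fund_form g I) x X Y Z = wedge12 \<theta> (fund_form g I) x X Y Z"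
  shows "\<forall>x\<in>U. \<forall>X. \<theta> x \<bullet> X =
           1 / (2 * ((angle_fun I J x)\<^sup>2 - 1)) * dd (angle_fun I J) x (commutator I J x *v X)"
proof (intro ballI allI)
  fix x X assume xU: "x \<in> U"
  note E = pw_extract[OF assms(1) xU assms(3)]
  have gsx: "transpose (g x) = g x" by (rule E(1))
  have gpos: "\<And>X. X \<noteq> 0 \<Longrightarrow> X \<bullet> (g x *v X) > 0" by (rule E(2))
  have I2: "I x ** I x = - mat 1" by (rule E(3))
  have Ig: "\<And>X Y. (I x *v X) \<bullet> (g x *v (I x *v Y)) = X \<bullet> (g x *v Y)" by (rule E(4))
  have J2: "J x ** J x = - mat 1" by (rule E(5))
  have Jg: "\<And>X Y. (J x *v X) \<bullet> (g x *v (J x *v Y)) = X \<bullet> (g x *v Y)" by (rule E(6))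
  define C where "C = I x ** J x - J x ** I x"
  have inv: "invertible C"
  proof -
    have "invertible (matrix_inv (g x) ** C)"
      using assms(2) xU unfolding nondegenerate_def commutator_def C_def by blast
    then obtain N where "N ** (matrix_inv (g x) ** C) = mat 1"
      unfolding invertible_def by blast
    then have "(N ** matrix_inv (g x)) ** C = mat 1" by (simp add: matrix_mul_assoc)
    then have "C ** (N ** matrix_inv (g x)) = mat 1" by (simp add: matrix_left_right_inverse)
    then show ?thesis unfolding invertible_def
      using \<open>(N ** matrix_inv (g x)) ** C = mat 1\<close> by blast
  qed
  obtain f1 f2 f3 f4 where fr:
     "f1 \<bullet> (g x *v f1) = 1" "f1 \<bullet> (g x *v f2) = 0" "f1 \<bullet> (g x *v f3) = 0" "f1 \<bullet> (g x *v f4) = 0"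
     "f2 \<bullet> (g x *v f1) = 0" "f2 \<bullet> (g x *v f2) = 1" "f2 \<bullet> (g x *v f3) = 0" "f2 \<bullet> (g x *v f4) = 0"
     "f3 \<bullet> (g x *v f1) = 0" "f3 \<bullet> (g x *v f2) = 0" "f3 \<bullet> (g x *v f3) = 1" "f3 \<bullet> (g x *v f4) = 0"
     "f4 \<bullet> (g x *v f1) = 0" "f4 \<bullet> (g x *v f2) = 0" "f4 \<bullet> (g x *v f3) = 0" "f4 \<bullet> (g x *v f4) = 1"
     and If: "I x *v f1 = f2" "I x *v f2 = - f1" "I x *v f3 = f4" "I x *v f4 = - f3"
    using frame[OF gsx I2 Ig gpos] by blast
  have key0: "trace (Dm I x v ** J x + I x ** Dm J x v) = 2 * (\<theta> x \<bullet> ((I x ** J x - J x ** I x) *v v))"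
    if "v = f1 \<or> v = f2 \<or> v = f3 \<or> v = f4" for v
    by (rule pw_frame[OF gsx I2 Ig J2 Jg E(7-16) fr If that])
  define L where "L = (\<lambda>v. trace (Dm I x v ** J x + I x ** Dm J x v) - 2 * (\<theta> x \<bullet> (C *v v)))"
  have linL: "linear L"
    unfolding L_def
    by (rule linearI) (simp_all add: linear_add[OF E(8)] linear_add[OF E(9)] linear_scale[OF E(8)] linear_scale[OF E(9)]
        mm_add_r matrix_add_ldistrib mm_scale_l mm_scale_r trace_add trace_scaleR mv_add mv_scaleR
        inner_add_right algebra_simps)
  have key: "trace (Dm I x v ** J x + I x ** Dm J x v) = 2 * (\<theta> x \<bullet> (C *v v))" for v
  proof -
    have "L v = 0"
      by (rule lin4[OF linL frame_span_trace(1)[OF fr, of v]]) (simp_all add: L_def key0 C_def)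
    then show ?thesis unfolding L_def by simp
  qed
  have CC: "C *v (C *v Y) = (4 * ((trace (I x ** J x) / 4)^2 - 1)) *\<^sub>R Y" for Y
    unfolding C_def by (rule orient[OF gsx I2 Ig J2 Jg fr If inv[unfolded C_def]])
  define p where "p = angle_fun I J x"
  have pdef: "trace (I x ** J x) / 4 = p" unfolding p_def angle_fun_def ..
  have p1: "p^2 - 1 \<noteq> 0"
  proof
    assume "p^2 - 1 = 0"
    then have "C *v (C *v f1) = 0" using CC[of f1] pdef by simp
    moreover from inv obtain B where "B ** C = mat 1" unfolding invertible_def by blast
    ultimately have "f1 = B *v (B *v (C *v (C *v f1)))"
      by (metis matrix_vector_mul_assoc matrix_vector_mul_lid)
    then have "f1 = 0" using \<open>C *v (C *v f1) = 0\<close> by (simp add: matrix_vector_mult_0_right)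
    with fr(1) show False by simp
  qed
  have "dd (angle_fun I J) x (C *v X) = trace (Dm I x (C *v X) ** J x + I x ** Dm J x (C *v X)) / 4"
    by (rule E(17))
  also have "\<dots> = (\<theta> x \<bullet> (C *v (C *v X))) / 2" unfolding key by simp
  also have "\<dots> = 2 * (p^2 - 1) * (\<theta> x \<bullet> X)" unfolding CC pdef by (simp add: inner_scaleR_right inner_diff_right field_simps)
  finally have "dd (angle_fun I J) x (C *v X) = 2 * (p^2 - 1) * (\<theta> x \<bullet> X)" .
  then show "\<theta> x \<bullet> X = 1 / (2 * ((angle_fun I J x)\<^sup>2 - 1)) * dd (angle_fun I J) x (commutator I J x *v X)"
    using p1 unfolding commutator_def C_def[symmetric] p_def[symmetric] by (simp add: field_simps)
qed

end
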